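(* Let $$E=\begin{bmatrix} J_{k,a} & -J_{k,b} & J_{k,c} & -J_{k,d} & 0 & 0 \\ -J_{l,a} & J_{l,b} & -J_{l,c} & J_{l,d} & 0 & 0 \\ J_{p,a} & -J_{p,b} & 0 & 0 & J_{p,e} & -J_{p,f} \\ -J_{q,a} & J_{q,b} & 0 & 0 & -J_{q,e} & J_{q,f} \\ 0 & 0 & J_{r,c} & -J_{r,d} & -J_{r,e} & J_{r,f} \\ 0 & 0 & -J_{s,c} & J_{s,d} & J_{s,e} & -J_{s,f} \\ \end{bmatrix}$$ where $E\mathbf{1}=0$, $\mathbf{1}^TE=0^T$, and $a+b$, $c+d$, $e+f$, $k+l$, $p+q$ and $r+s$ are positive. Let \begin{align*} A=\begin{bmatrix} 0 & J_{k,b} & 0 & J_{k,d} & X_{11} & X_{12} \\ J_{l,a} & 0 & J_{l,c} & 0 & X_{21} & X_{22} \\ 0 & J_{p,b} & Y_{11} & Y_{12} & 0 & J_{p,f} \\ J_{q,a} & 0 & Y_{21} & Y_{22} & J_{q,e} & 0 \\ Z_{11} & Z_{12} & 0 & J_{r,d} & J_{r,e} & 0 \\ Z_{21} & Z_{22} & J_{s,c} & 0 & 0 & J_{s,f} \\ \end{bmatrix} \end{align*} be a $(0,1)$ matrix conformally partitioned with $E$. Suppose that $X=\begin{bmatrix} X_{11} & X_{12}\\ X_{21} & X_{22} \end{bmatrix}$, $Y=\begin{bmatrix} Y_{11} & Y_{12}\\ Y_{21} & Y_{22} \end{bmatrix}$ and $Z=\begin{bmatrix} Z_{11} & Z_{12}\\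 Z_{21} & Z_{22} \end{bmatrix}$. Then, $A$ and $A+E$ are Gram mates if and only if $X$, $Y$ and $Z$ satisfy the following conditions: \begin{enumerate} \item there are integers $x_1,x_2,y_1,y_2,z_1$ and $z_2$ such that $X\begin{bmatrix} \mathbf{1}\\ -\mathbf{1} \end{bmatrix}=\begin{bmatrix} x_1\mathbf{1}\\ x_2\mathbf{1} \end{bmatrix}$, $Y\begin{bmatrix} \mathbf{1}\\ -\mathbf{1} \end{bmatrix}=\begin{bmatrix} y_1\mathbf{1}\\ y_2\mathbf{1} \end{bmatrix}$, $Z\begin{bmatrix} \mathbf{1}\\ -\mathbf{1} \end{bmatrix}=\begin{bmatrix} z_1\mathbf{1}\\ z_2\mathbf{1} \end{bmatrix}$ and $x_1=y_2=-z_2$, $x_2=y_1=-z_1$, $x_1+x_2=y_1+y_2=-(z_1+z_2)=e-f$; and \item there are integers $\alpha_1,\alpha_2,\beta_1,\beta_2,\gamma_1$ and $\gamma_2$ such that $X^T\begin{bmatrix} \mathbf{1}\\ -\mathbf{1} \end{bmatrix}=\begin{bmatrix} \alpha_1\mathbf{1}\\ \alpha_2\mathbf{1} \end{bmatrix}$, $Y^T\begin{bmatrix} \mathbf{1}\\ -\mathbf{1} \end{bmatrix}=\begin{bmatrix} \beta_1\mathbf{1}\\ \beta_2\mathbf{1} \end{bmatrix}$, $Z^T\begin{bmatrix} \mathbf{1}\\ -\mathbf{1} \end{bmatrix}=\begin{bmatrix} \gamma_1\mathbf{1}\\ \gamma_2\mathbf{1} \end{bmatrix}$ and $\gamma_1=\beta_2=-\alpha_2$,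 $\gamma_2=\beta_1=-\alpha_1$, $\gamma_1+\gamma_2=\beta_1+\beta_2=-(\alpha_1+\alpha_2)=l-k$. \end{enumerate} In particular, conditions 1 and 2 imply $e\alpha_1-f\alpha_2=kx_1-lx_2$, $c\beta_1-d\beta_2=py_1-qy_2$, and $a\gamma_1-b\gamma_2=rz_1-sz_2$.
   Context: $J_{p,q}$ denotes the $p\times q$ all-ones matrix (absent if $p=0$ or $q=0$) and $\mathbf{1}$ an all-ones column vector of appropriate size. Two $(0,1)$ matrices $A\neq B$ are Gram mates if $AA^T=BB^T$ and $A^TA=B^TB$. *)

theory Defs
  imports "Jordan_Normal_Form.Matrix"
begin

definition J :: "nat \<Rightarrow> nat \<Rightarrow> int mat" where
  "J m n = mat m n (\<lambda>_. 1)"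

definition ones :: "nat \<Rightarrow> int vec" where
  "ones n = vec n (\<lambda>_. 1)"

text \<open>Locate index i in a list of consecutive block sizes: (block number, offset).\<close>
fun blk :: "nat list \<Rightarrow> nat \<Rightarrow> nat \<times> nat" where
  "blk [] i = (0, i)"
| "blk (n # ns) i = (if i < n then (0, i) else (let (bi, oi) = blk ns (i - n) in (Suc bi, oi)))"

definition block_mat :: "nat list \<Rightarrow> nat list \<Rightarrow> int mat list list \<Rightarrow> int mat" where
  "block_mat rs cs Bs = mat (sum_list rs) (sum_list cs)
     (\<lambda>(i, j). case blk rs i of (I, oi) \<Rightarrow> case blk cs j of (K, oj) \<Rightarrow> (Bs ! I ! K) $$ (oi, oj))"

definition zero_one_mat :: "int mat \<Rightarrow> bool" where
  "zero_one_mat M \<longleftrightarrow> (\<forall>i < dim_row M. \<forall>j < dim_col M. M $$ (i, j) \<in> {0, 1})"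

definition gram_mates :: "int mat \<Rightarrow> int mat \<Rightarrow> bool" where
  "gram_mates A B \<longleftrightarrow> zero_one_mat A \<and> zero_one_mat B \<and> A \<noteq> B \<and>
     A * A\<^sup>T = B * B\<^sup>T \<and> A\<^sup>T * A = B\<^sup>T * B"

definition pm_vec :: "nat \<Rightarrow> nat \<Rightarrow> int vec" where
  "pm_vec u v = vec (u + v) (\<lambda>j. if j < u then 1 else -1)"

definition two_vec :: "nat \<Rightarrow> nat \<Rightarrow> int \<Rightarrow> int \<Rightarrow> int vec" where
  "two_vec u v x y = vec (u + v) (\<lambda>i. if i < u then x else y)"

end

theory Submission
  imports Defs
begin


lemma take_nth_le: "I < length ns \<Longrightarrow> sum_list (take I ns) + ns!I \<le> sum_list (ns::nat list)"
  by (induction ns arbitrary: I) (auto simp: nth_Cons split: nat.splits)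

lemma blk_lt: "i < sum_list ns \<Longrightarrow> blk ns i = (I,w) \<Longrightarrow>
   I < length ns \<and> w < ns!I \<and> i = sum_list (take I ns) + w"
proof (induction ns arbitrary: i I w)
  case Nil then show ?case by simp
next
  case (Cons n ns)
  show ?case
  proof (cases "i < n")
    case True then show ?thesis using Cons.prems by auto
  next
    case False
    obtain I' w' where b: "blk ns (i - n) = (I',w')" by (cases "blk ns (i-n)") auto
    with Cons.prems False have "I = Suc I'" "w = w'" by auto
    moreover have "I' < length ns \<and> w' < ns!I' \<and> i - n = sum_list (take I' ns) + w'"
      using Cons.IH[OF _ b] Cons.prems False by auto
    ultimately show ?thesis using False by auto
  qed
qed

lemma blk_at: "I < length ns \<Longrightarrow> w < ns!I \<Longrightarrow> blk ns (sum_list (take I ns) + w) = (I,w)"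
proof (induction ns arbitrary: I)
  case Nil then show ?case by simp
next
  case (Cons n ns)
  then show ?case by (cases I) auto
qed

lemma sum_lt_add: "(\<Sum>i<(n::nat)+m. h i) = (\<Sum>i<n. h i) + (\<Sum>i<m. h (n+i))"
  by (induction m) (auto simp: add.assoc)

lemma sum_split: "(\<Sum>j<sum_list (ns::nat list). h j) = (\<Sum>K<length ns. \<Sum>w<ns!K. h (sum_list (take K ns) + w))"
proof (induction ns arbitrary: h)
  case Nil then show ?case by simp
next
  case (Cons n ns)
  show ?case
    by (simp add: sum_lt_add Cons.IH sum.lessThan_Suc_shift add.assoc del: sum.lessThan_Suc)
qed

lemma block_mat_dims[simp]: "dim_row (block_mat rs cs Bs) = sum_list rs" "dim_col (block_mat rs cs Bs) = sum_list cs"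
  by (auto simp: block_mat_def)

lemma block_mat_at: "I < length rs \<Longrightarrow> oi < rs!I \<Longrightarrow> K < length cs \<Longrightarrow> w < cs!K \<Longrightarrow>
  block_mat rs cs Bs $$ (sum_list (take I rs) + oi, sum_list (take K cs) + w) = Bs!I!K $$ (oi,w)"
proof -
  assume a: "I < length rs" "oi < rs!I" "K < length cs" "w < cs!K"
  have "sum_list (take I rs) + oi < sum_list rs"
    using take_nth_le[OF a(1)] a(2) by linarith
  moreover have "sum_list (take K cs) + w < sum_list cs"
    using take_nth_le[OF a(3)] a(4) by linarith
  ultimately show ?thesis using a by (simp add: block_mat_def blk_at)
qed



lemma mmt_entry: "i < dim_row M \<Longrightarrow> j < dim_row M \<Longrightarrow>
   (M * M\<^sup>T) $$ (i,j) = (\<Sum>c<dim_col M. M $$ (i,c) * M $$ (j,c))"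
  by (simp add: scalar_prod_def atLeast0LessThan)

definition Sblk :: "nat list \<Rightarrow> int mat list list \<Rightarrow> nat \<Rightarrow> nat \<Rightarrow> nat \<Rightarrow> int" where
  "Sblk cs B I oi K = (\<Sum>w<cs!K. B!I!K $$ (oi,w))"

lemma gram_entry:
  fixes rs cs :: "nat list" and BA BE :: "int mat list list"
  assumes I: "I < length rs" "oi < rs!I" and L: "L < length rs" "oj < rs!L"
    and ep: "\<And>I K oi w. I < length rs \<Longrightarrow> K < length cs \<Longrightarrow> oi < rs!I \<Longrightarrow> w < cs!K \<Longrightarrow> BE!I!K $$ (oi,w) = ep I K"
  defines "M \<equiv> block_mat rs cs BA" and "N \<equiv> block_mat rs cs BE"
  shows "((M+N)*(M+N)\<^sup>T) $$ (sum_list (take I rs) + oi, sum_list (take L rs) + oj) =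
     (M*M\<^sup>T) $$ (sum_list (take I rs) + oi, sum_list (take L rs) + oj) +
     (\<Sum>K<length cs. ep L K * Sblk cs BA I oi K + ep I K * Sblk cs BA L oj K + ep I K * ep L K * int (cs!K))"
proof -
  let ?i = "sum_list (take I rs) + oi" and ?j = "sum_list (take L rs) + oj"
  have li: "?i < sum_list rs" using take_nth_le[OF I(1)] I(2) by linarith
  have lj: "?j < sum_list rs" using take_nth_le[OF L(1)] L(2) by linarith
  have "((M+N)*(M+N)\<^sup>T) $$ (?i,?j) = (\<Sum>c<sum_list cs. (M+N) $$ (?i,c) * (M+N) $$ (?j,c))"
    using li lj by (subst mmt_entry) (auto simp: M_def N_def)
  also have "\<dots> = (\<Sum>c<sum_list cs. M $$ (?i,c) * M $$ (?j,c) +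
      (M $$ (?i,c) * N $$ (?j,c) + N $$ (?i,c) * M $$ (?j,c) + N $$ (?i,c) * N $$ (?j,c)))"
    using li lj by (intro sum.cong) (auto simp: M_def N_def algebra_simps)
  also have "\<dots> = (M*M\<^sup>T) $$ (?i,?j) + (\<Sum>c<sum_list cs. 
      (M $$ (?i,c) * N $$ (?j,c) + N $$ (?i,c) * M $$ (?j,c) + N $$ (?i,c) * N $$ (?j,c)))"
    using li lj mmt_entry[of ?i M ?j] by (simp add: sum.distrib M_def)
  also have "(\<Sum>c<sum_list cs. 
      (M $$ (?i,c) * N $$ (?j,c) + N $$ (?i,c) * M $$ (?j,c) + N $$ (?i,c) * N $$ (?j,c))) =
     (\<Sum>K<length cs. ep L K * Sblk cs BA I oi K + ep I K * Sblk cs BA L oj K + ep I K * ep L K * int (cs!K))"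
    unfolding sum_split
  proof (rule sum.cong[OF refl])
    fix K assume K: "K \<in> {..<length cs}"
    have "(\<Sum>w<cs!K. M $$ (?i, sum_list (take K cs) + w) * N $$ (?j, sum_list (take K cs) + w) +
          N $$ (?i, sum_list (take K cs) + w) * M $$ (?j, sum_list (take K cs) + w) +
          N $$ (?i, sum_list (take K cs) + w) * N $$ (?j, sum_list (take K cs) + w))
       = (\<Sum>w<cs!K. ep L K * BA!I!K $$ (oi,w) + ep I K * BA!L!K $$ (oj,w) + ep I K * ep L K)"
      using K I L by (intro sum.cong) (auto simp: M_def N_def block_mat_at ep mult.commute)
    also have "\<dots> = ep L K * Sblk cs BA I oi K + ep I K * Sblk cs BA L oj K + ep I K * ep L K * int (cs!K)"
      by (simp add: Sblk_def sum.distrib sum_distrib_left)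
    finally show "(\<Sum>w<cs!K. M $$ (?i, sum_list (take K cs) + w) * N $$ (?j, sum_list (take K cs) + w) +
          N $$ (?i, sum_list (take K cs) + w) * M $$ (?j, sum_list (take K cs) + w) +
          N $$ (?i, sum_list (take K cs) + w) * N $$ (?j, sum_list (take K cs) + w))
       = ep L K * Sblk cs BA I oi K + ep I K * Sblk cs BA L oj K + ep I K * ep L K * int (cs!K)" .
  qed
  finally show ?thesis .
qed

lemma rowsum_entry:
  fixes rs cs :: "nat list" and BE :: "int mat list list"
  assumes I: "I < length rs" "oi < rs!I"
    and ep: "\<And>I K oi w. I < length rs \<Longrightarrow> K < length cs \<Longrightarrow> oi < rs!I \<Longrightarrow> w < cs!K \<Longrightarrow> BE!I!K $$ (oi,w) = ep I K"
  shows "(block_mat rs cs BE *\<^sub>v ones (sum_list cs)) $ (sum_list (take I rs) + oi) = (\<Sum>K<length cs. ep I K * int (cs!K))"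
proof -
  have li: "sum_list (take I rs) + oi < sum_list rs" using take_nth_le[OF I(1)] I(2) by linarith
  then have "(block_mat rs cs BE *\<^sub>v ones (sum_list cs)) $ (sum_list (take I rs) + oi) =
     (\<Sum>c<sum_list cs. block_mat rs cs BE $$ (sum_list (take I rs) + oi, c))"
    by (simp add: scalar_prod_def atLeast0LessThan ones_def)
  also have "\<dots> = (\<Sum>K<length cs. ep I K * int (cs!K))"
    unfolding sum_split using I by (intro sum.cong) (auto simp: block_mat_at ep)
  finally show ?thesis .
qed

lemma block_mat_transpose:
  assumes "\<And>I K oi w. I < length rs \<Longrightarrow> K < length cs \<Longrightarrow> oi < rs!I \<Longrightarrow> w < cs!K \<Longrightarrow> B'!K!I $$ (w,oi) = B!I!K $$ (oi,w)"
  shows "(block_mat rs cs B)\<^sup>T = block_mat cs rs B'"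
proof (rule eq_matI)
  fix i j assume "i < dim_row (block_mat cs rs B')" "j < dim_col (block_mat cs rs B')"
  then have i: "i < sum_list cs" and j: "j < sum_list rs" by auto
  obtain K w where bi: "blk cs i = (K,w)" by (cases "blk cs i") auto
  obtain I oi where bj: "blk rs j = (I,oi)" by (cases "blk rs j") auto
  from blk_lt[OF i bi] blk_lt[OF j bj] assms show "(block_mat rs cs B)\<^sup>T $$ (i,j) = block_mat cs rs B' $$ (i,j)"
    using i j by (simp add: block_mat_def bi bj blk_at)
qed auto



definition Eb :: "nat \<Rightarrow> nat \<Rightarrow> nat \<Rightarrow> nat \<Rightarrow> nat \<Rightarrow> nat \<Rightarrow> nat \<Rightarrow> nat \<Rightarrow> nat \<Rightarrow> nat \<Rightarrow> nat \<Rightarrow> nat \<Rightarrow> int mat list list" where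
 "Eb k l p q r s a b c d e f = 
      [[ J k a, - J k b, J k c, - J k d, 0\<^sub>m k e, 0\<^sub>m k f],
       [- J l a, J l b, - J l c, J l d, 0\<^sub>m l e, 0\<^sub>m l f],
       [ J p a, - J p b, 0\<^sub>m p c, 0\<^sub>m p d, J p e, - J p f],
       [- J q a, J q b, 0\<^sub>m q c, 0\<^sub>m q d, - J q e, J q f],
       [0\<^sub>m r a, 0\<^sub>m r b, J r c, - J r d, - J r e, J r f],
       [0\<^sub>m s a, 0\<^sub>m s b, - J s c, J s d, J s e, - J s f]]"

definition Ab :: "nat \<Rightarrow> nat \<Rightarrow> nat \<Rightarrow> nat \<Rightarrow> nat \<Rightarrow> nat \<Rightarrow> nat \<Rightarrow> nat \<Rightarrow> nat \<Rightarrow> nat \<Rightarrow> nat \<Rightarrow> nat \<Rightarrow>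
   int mat \<Rightarrow> int mat \<Rightarrow> int mat \<Rightarrow> int mat \<Rightarrow> int mat \<Rightarrow> int mat \<Rightarrow> int mat \<Rightarrow> int mat \<Rightarrow> int mat \<Rightarrow> int mat \<Rightarrow> int mat \<Rightarrow> int mat \<Rightarrow> int mat list list" where
 "Ab k l p q r s a b c d e f X11 X12 X21 X22 Y11 Y12 Y21 Y22 Z11 Z12 Z21 Z22 =
      [[0\<^sub>m k a, J k b, 0\<^sub>m k c, J k d, X11, X12],
       [J l a, 0\<^sub>m l b, J l c, 0\<^sub>m l d, X21, X22],
       [0\<^sub>m p a, J p b, Y11, Y12, 0\<^sub>m p e, J p f],
       [J q a, 0\<^sub>m q b, Y21, Y22, J q e, 0\<^sub>m q f],
       [Z11, Z12, 0\<^sub>m r c, J r d, J r e, 0\<^sub>m r f],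
       [Z21, Z22, J s c, 0\<^sub>m s d, 0\<^sub>m s e, J s f]]"

definition epT :: "nat \<Rightarrow> nat \<Rightarrow> int" where
  "epT I K = [[1,-1,1,-1,0,0],[-1,1,-1,1,0,0],[1,-1,0,0,1,-1],[-1,1,0,0,-1,1],[0,0,1,-1,-1,1],[0,0,-1,1,1,-1]]!I!K"

lemma less6: "(I::nat) < 6 \<Longrightarrow> I = 0 \<or> I = 1 \<or> I = 2 \<or> I = 3 \<or> I = 4 \<or> I = 5" by auto

lemma J_idx[simp]: "i < m \<Longrightarrow> j < n \<Longrightarrow> J m n $$ (i,j) = 1" "dim_row (J m n) = m" "dim_col (J m n) = n"
  by (auto simp: J_def)

lemma Eb_ep: "I < 6 \<Longrightarrow> K < 6 \<Longrightarrow> oi < [k,l,p,q,r,s]!I \<Longrightarrow> w < [a,b,c,d,e,f]!K \<Longrightarrow>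
   Eb k l p q r s a b c d e f !I!K $$ (oi,w) = epT I K"
  using less6[of I] less6[of K] by (auto simp: Eb_def epT_def)

lemma sum6: "(\<Sum>K<(6::nat). g K) = g 0 + g 1 + g 2 + g 3 + g 4 + (g 5::int)"
  by (simp add: eval_nat_numeral)

lemma sumJ: "i < m \<Longrightarrow> (\<Sum>w<n. J m n $$ (i,w)) = int n" by simp
lemma sum0: "i < m \<Longrightarrow> (\<Sum>w<n. 0\<^sub>m m n $$ (i,w)) = (0::int)" by (rule sum.neutral) auto



locale gm =
  fixes k l p q r s a b c d e f :: nat
    and X11 X12 X21 X22 Y11 Y12 Y21 Y22 Z11 Z12 Z21 Z22 :: "int mat"
  assumes dims:
      "X11 \<in> carrier_mat k e" "X12 \<in> carrier_mat k f"
      "X21 \<in> carrier_mat l e" "X22 \<in> carrier_mat l f"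
      "Y11 \<in> carrier_mat p c" "Y12 \<in> carrier_mat p d"
      "Y21 \<in> carrier_mat q c" "Y22 \<in> carrier_mat q d"
      "Z11 \<in> carrier_mat r a" "Z12 \<in> carrier_mat r b"
      "Z21 \<in> carrier_mat s a" "Z22 \<in> carrier_mat s b"
    and rel1: "int a - int b = int d - int c"
    and rel2: "int a - int b = int f - int e"
    and pos: "k + l > 0" "p + q > 0" "r + s > 0"
begin

abbreviation "rs \<equiv> [k,l,p,q,r,s]"
abbreviation "cs \<equiv> [a,b,c,d,e,f]"
abbreviation "BA \<equiv> Ab k l p q r s a b c d e f X11 X12 X21 X22 Y11 Y12 Y21 Y22 Z11 Z12 Z21 Z22"
abbreviation "S \<equiv> Sblk cs BA"

definition tau :: "nat \<Rightarrow> nat \<Rightarrow> int" where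
  "tau I oi = (let u = int e - int f in
     if I = 0 then S 0 oi 4 - S 0 oi 5 else if I = 1 then u - (S 1 oi 4 - S 1 oi 5)
     else if I = 2 then u - (S 2 oi 2 - S 2 oi 3) else if I = 3 then S 3 oi 2 - S 3 oi 3
     else if I = 4 then S 4 oi 0 - S 4 oi 1 + u else - (S 5 oi 0 - S 5 oi 1))"

lemma G_case:
  assumes "I < 6" "L < 6" "oi < rs!I" "oj < rs!L"
  shows "(\<Sum>K<6. epT L K * S I oi K + epT I K * S L oj K + epT I K * epT L K * int (cs!K)) = 0
    \<longleftrightarrow> (I div 2 = L div 2 \<or> tau I oi = tau L oj)"
  using less6[OF assms(1)] less6[OF assms(2)] assms(3,4) rel1 rel2
  apply (elim disjE)
  apply (simp_all add: sum6 Sblk_def tau_def Ab_def epT_def sumJ sum0)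
  apply (arith+)
  done


abbreviation "AA \<equiv> block_mat rs cs BA"
abbreviation "EE \<equiv> block_mat rs cs (Eb k l p q r s a b c d e f)"

lemma ge:
  assumes "I < 6" "L < 6" "oi < rs!I" "oj < rs!L"
  shows "((AA+EE)*(AA+EE)\<^sup>T) $$ (sum_list (take I rs) + oi, sum_list (take L rs) + oj) =
     (AA*AA\<^sup>T) $$ (sum_list (take I rs) + oi, sum_list (take L rs) + oj) +
     (\<Sum>K<6. epT L K * S I oi K + epT I K * S L oj K + epT I K * epT L K * int (cs!K))"
proof -
  have "((AA+EE)*(AA+EE)\<^sup>T) $$ (sum_list (take I rs) + oi, sum_list (take L rs) + oj) =
     (AA*AA\<^sup>T) $$ (sum_list (take I rs) + oi, sum_list (take L rs) + oj) +
     (\<Sum>K<length cs. epT L K * S I oi K + epT I K * S L oj K + epT I K * epT L K * int (cs!K))"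
    by (rule gram_entry) (use assms in \<open>auto intro: Eb_ep\<close>)
  moreover have l6: "length cs = (6::nat)" by simp
  ultimately show ?thesis by (simp only:)
qed

lemma gram_iff: "(AA+EE)*(AA+EE)\<^sup>T = AA*AA\<^sup>T \<longleftrightarrow>
   (\<forall>I<6. \<forall>L<6. \<forall>oi<rs!I. \<forall>oj<rs!L. I div 2 \<noteq> L div 2 \<longrightarrow> tau I oi = tau L oj)"
proof
  assume eq: "(AA+EE)*(AA+EE)\<^sup>T = AA*AA\<^sup>T"
  show "\<forall>I<6. \<forall>L<6. \<forall>oi<rs!I. \<forall>oj<rs!L. I div 2 \<noteq> L div 2 \<longrightarrow> tau I oi = tau L oj"
  proof (intro allI impI)
    fix I L oi oj assume a: "I < 6" "L < 6" "oi < rs!I" "oj < rs!L" "I div 2 \<noteq> L div 2"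
    from ge[OF a(1-4)] eq have "(\<Sum>K<6. epT L K * S I oi K + epT I K * S L oj K + epT I K * epT L K * int (cs!K)) = 0"
      by simp
    with G_case[OF a(1-4)] a(5) show "tau I oi = tau L oj" by simp
  qed
next
  assume h: "\<forall>I<6. \<forall>L<6. \<forall>oi<rs!I. \<forall>oj<rs!L. I div 2 \<noteq> L div 2 \<longrightarrow> tau I oi = tau L oj"
  show "(AA+EE)*(AA+EE)\<^sup>T = AA*AA\<^sup>T"
  proof (rule eq_matI)
    fix i j assume "i < dim_row (AA*AA\<^sup>T)" "j < dim_col (AA*AA\<^sup>T)"
    then have i: "i < sum_list rs" and j: "j < sum_list rs" by auto
    obtain I oi where bi: "blk rs i = (I,oi)" by (cases "blk rs i") auto
    obtain L oj where bj: "blk rs j = (L,oj)" by (cases "blk rs j") auto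
    from blk_lt[OF i bi] have I: "I < 6" "oi < rs!I" "i = sum_list (take I rs) + oi" by auto
    from blk_lt[OF j bj] have L: "L < 6" "oj < rs!L" "j = sum_list (take L rs) + oj" by auto
    have "(\<Sum>K<6. epT L K * S I oi K + epT I K * S L oj K + epT I K * epT L K * int (cs!K)) = 0"
      using G_case[OF I(1) L(1) I(2) L(2)] h I L by blast
    then show "((AA+EE)*(AA+EE)\<^sup>T) $$ (i,j) = (AA*AA\<^sup>T) $$ (i,j)"
      using ge[OF I(1) L(1) I(2) L(2)] I(3) L(3) by simp
  qed auto
qed

end


lemma all_split: "(\<forall>i<(k::nat)+l. P i) \<longleftrightarrow> (\<forall>i<k. P i) \<and> (\<forall>w<l. P (k+w))"
  by (auto, metis add_diff_inverse_nat add_less_cancel_left)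

lemma fb_pm:
  assumes "M11 \<in> carrier_mat k e" "M12 \<in> carrier_mat k f" "M21 \<in> carrier_mat l e" "M22 \<in> carrier_mat l f"
  shows "four_block_mat M11 M12 M21 M22 *\<^sub>v pm_vec e f = two_vec k l x1 x2 \<longleftrightarrow>
    (\<forall>w<k. (\<Sum>j<e. M11$$(w,j)) - (\<Sum>j<f. M12$$(w,j)) = x1) \<and>
    (\<forall>w<l. (\<Sum>j<e. M21$$(w,j)) - (\<Sum>j<f. M22$$(w,j)) = x2)" (is "_ \<longleftrightarrow> ?R")
proof -
  let ?F = "four_block_mat M11 M12 M21 M22"
  have dF: "dim_row ?F = k + l" "dim_col ?F = e + f" using assms by auto
  have ent: "(?F *\<^sub>v pm_vec e f) $ i = (if i < k then (\<Sum>j<e. M11$$(i,j)) - (\<Sum>j<f. M12$$(i,j))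
       else (\<Sum>j<e. M21$$(i-k,j)) - (\<Sum>j<f. M22$$(i-k,j)))" if i: "i < k + l" for i
  proof -
    have "(?F *\<^sub>v pm_vec e f) $ i = (\<Sum>j<e+f. ?F $$ (i,j) * pm_vec e f $ j)"
      using i dF by (simp add: scalar_prod_def atLeast0LessThan pm_vec_def)
    also have "\<dots> = (\<Sum>j<e. ?F $$ (i,j)) - (\<Sum>j<f. ?F $$ (i,e+j))"
      by (simp add: sum_lt_add pm_vec_def sum_negf)
    also have "\<dots> = (if i < k then (\<Sum>j<e. M11$$(i,j)) - (\<Sum>j<f. M12$$(i,j))
       else (\<Sum>j<e. M21$$(i-k,j)) - (\<Sum>j<f. M22$$(i-k,j)))"
      using i assms by (simp add: four_block_mat_def Let_def)
    finally show ?thesis .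
  qed
  have "?F *\<^sub>v pm_vec e f = two_vec k l x1 x2 \<longleftrightarrow> (\<forall>i<k+l. (?F *\<^sub>v pm_vec e f) $ i = two_vec k l x1 x2 $ i)"
    using dF by (auto simp: vec_eq_iff two_vec_def)
  also have "\<dots> \<longleftrightarrow> (\<forall>i<k+l. (if i < k then (\<Sum>j<e. M11$$(i,j)) - (\<Sum>j<f. M12$$(i,j))
       else (\<Sum>j<e. M21$$(i-k,j)) - (\<Sum>j<f. M22$$(i-k,j))) = (if i < k then x1 else x2))"
    using ent by (auto simp: two_vec_def)
  also have "\<dots> \<longleftrightarrow> ?R" unfolding all_split by simp
  finally show ?thesis .
qed

context gm begin

definition "rX1 w = (\<Sum>j<e. X11$$(w,j)) - (\<Sum>j<f. X12$$(w,j))"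
definition "rX2 w = (\<Sum>j<e. X21$$(w,j)) - (\<Sum>j<f. X22$$(w,j))"
definition "rY1 w = (\<Sum>j<c. Y11$$(w,j)) - (\<Sum>j<d. Y12$$(w,j))"
definition "rY2 w = (\<Sum>j<c. Y21$$(w,j)) - (\<Sum>j<d. Y22$$(w,j))"
definition "rZ1 w = (\<Sum>j<a. Z11$$(w,j)) - (\<Sum>j<b. Z12$$(w,j))"
definition "rZ2 w = (\<Sum>j<a. Z21$$(w,j)) - (\<Sum>j<b. Z22$$(w,j))"

lemma tau_simps:
  "tau 0 w = rX1 w" "tau 1 w = (int e - int f) - rX2 w"
  "tau 2 w = (int e - int f) - rY1 w" "tau 3 w = rY2 w"
  "tau 4 w = rZ1 w + (int e - int f)" "tau 5 w = - rZ2 w"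
  by (simp_all add: tau_def Sblk_def Ab_def rX1_def rX2_def rY1_def rY2_def rZ1_def rZ2_def)

abbreviation "XX \<equiv> four_block_mat X11 X12 X21 X22"
abbreviation "YY \<equiv> four_block_mat Y11 Y12 Y21 Y22"
abbreviation "ZZ \<equiv> four_block_mat Z11 Z12 Z21 Z22"

lemma XX_iff: "XX *\<^sub>v pm_vec e f = two_vec k l x1 x2 \<longleftrightarrow> (\<forall>w<k. rX1 w = x1) \<and> (\<forall>w<l. rX2 w = x2)"
  using fb_pm[OF dims(1-4)] by (simp add: rX1_def rX2_def)
lemma YY_iff: "YY *\<^sub>v pm_vec c d = two_vec p q x1 x2 \<longleftrightarrow> (\<forall>w<p. rY1 w = x1) \<and> (\<forall>w<q. rY2 w = x2)"
  using fb_pm[OF dims(5-8)] by (simp add: rY1_def rY2_def)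
lemma ZZ_iff: "ZZ *\<^sub>v pm_vec a b = two_vec r s x1 x2 \<longleftrightarrow> (\<forall>w<r. rZ1 w = x1) \<and> (\<forall>w<s. rZ2 w = x2)"
  using fb_pm[OF dims(9-12)] by (simp add: rZ1_def rZ2_def)

lemma cond_iff: "(\<forall>I<6. \<forall>L<6. \<forall>oi<rs!I. \<forall>oj<rs!L. I div 2 \<noteq> L div 2 \<longrightarrow> tau I oi = tau L oj) \<longleftrightarrow>
  (\<exists>x1 x2 y1 y2 z1 z2 :: int.
              XX *\<^sub>v pm_vec e f = two_vec k l x1 x2 \<and>
              YY *\<^sub>v pm_vec c d = two_vec p q y1 y2 \<and>
              ZZ *\<^sub>v pm_vec a b = two_vec r s z1 z2 \<and>
              x1 = y2 \<and> y2 = - z2 \<and> x2 = y1 \<and> y1 = - z1 \<and>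
              x1 + x2 = y1 + y2 \<and> y1 + y2 = - (z1 + z2) \<and> - (z1 + z2) = int e - int f)"
  (is "?H \<longleftrightarrow> ?C")
proof
  assume h: ?H
  have "\<exists>I0. I0 < 6 \<and> I0 div 2 = 0 \<and> 0 < rs!I0"
  proof (cases "k > 0")
    case True then show ?thesis by (intro exI[of _ 0]) simp
  next
    case False then show ?thesis using pos(1) by (intro exI[of _ 1]) simp
  qed
  then obtain I0 where I0: "I0 < 6" "I0 div 2 = 0" "0 < rs!I0" by blast
  have "\<exists>I1. I1 < 6 \<and> I1 div 2 = 1 \<and> 0 < rs!I1"
  proof (cases "p > 0")
    case True then show ?thesis by (intro exI[of _ 2]) simp
  next
    case False then show ?thesis using pos(2) by (intro exI[of _ 3]) simp
  qed
  then obtain I1 where I1: "I1 < 6" "I1 div 2 = 1" "0 < rs!I1" by blast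
  define t where "t = tau I0 0"
  have all: "tau I oi = t" if "I < 6" "oi < rs!I" for I oi
  proof (cases "I div 2 = 0")
    case True
    have "tau I oi = tau I1 0" using h[rule_format, OF that(1) I1(1) that(2) I1(3)] True I1(2) by simp
    moreover have "tau I0 0 = tau I1 0" using h[rule_format, OF I0(1) I1(1) I0(3) I1(3)] I0(2) I1(2) by simp
    ultimately show ?thesis by (simp add: t_def)
  next
    case False
    then show ?thesis using h[rule_format, OF that(1) I0(1) that(2) I0(3)] I0(2) t_def by simp
  qed
  let ?u = "int e - int f"
  have "\<forall>w<k. rX1 w = t" using all[of 0] tau_simps(1) by simp
  moreover have "\<forall>w<l. rX2 w = ?u - t"
  proof (intro allI impI)
    fix w assume "w < l" then have "tau 1 w = t" by (intro all) simp_all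
    then show "rX2 w = ?u - t" using tau_simps(2)[of w] by linarith
  qed
  moreover have "\<forall>w<p. rY1 w = ?u - t"
  proof (intro allI impI)
    fix w assume "w < p" then have "tau 2 w = t" by (intro all) simp_all
    then show "rY1 w = ?u - t" using tau_simps(3)[of w] by linarith
  qed
  moreover have "\<forall>w<q. rY2 w = t"
  proof (intro allI impI)
    fix w assume "w < q" then have "tau 3 w = t" by (intro all) simp_all
    then show "rY2 w = t" using tau_simps(4)[of w] by linarith
  qed
  moreover have "\<forall>w<r. rZ1 w = t - ?u"
  proof (intro allI impI)
    fix w assume "w < r" then have "tau 4 w = t" by (intro all) simp_all
    then show "rZ1 w = t - ?u" using tau_simps(5)[of w] by linarith
  qed
  moreover have "\<forall>w<s. rZ2 w = - t"
  proof (intro allI impI)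
    fix w assume "w < s" then have "tau 5 w = t" by (intro all) simp_all
    then show "rZ2 w = - t" using tau_simps(6)[of w] by linarith
  qed
  ultimately show ?C
    by (intro exI[of _ t] exI[of _ "?u - t"] exI[of _ "?u - t"] exI[of _ t] exI[of _ "t - ?u"] exI[of _ "-t"])
       (simp add: XX_iff YY_iff ZZ_iff)
next
  assume ?C
  then obtain x1 x2 y1 y2 z1 z2 where
    w: "XX *\<^sub>v pm_vec e f = two_vec k l x1 x2" "YY *\<^sub>v pm_vec c d = two_vec p q y1 y2"
       "ZZ *\<^sub>v pm_vec a b = two_vec r s z1 z2"
    and eqs: "x1 = y2" "y2 = - z2" "x2 = y1" "y1 = - z1" "x1 + x2 = int e - int f"
    by auto
  have v: "(\<forall>w<k. rX1 w = x1) \<and> (\<forall>w<l. rX2 w = x2)" "(\<forall>w<p. rY1 w = y1) \<and> (\<forall>w<q. rY2 w = y2)"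
       "(\<forall>w<r. rZ1 w = z1) \<and> (\<forall>w<s. rZ2 w = z2)"
    using w XX_iff YY_iff ZZ_iff by auto
  have all: "tau I oi = x1" if "I < 6" "oi < rs!I" for I oi
    using less6[OF that(1)]
  proof (elim disjE)
    assume "I = 0" then show ?thesis using that v tau_simps[of oi] by simp
  next
    assume "I = 1" then show ?thesis using that v eqs tau_simps[of oi] by (simp; (linarith)?)
  next
    assume "I = 2" then show ?thesis using that v eqs tau_simps[of oi] by (simp; (linarith)?)
  next
    assume "I = 3" then show ?thesis using that v eqs tau_simps[of oi] by (simp; (linarith)?)
  next
    assume "I = 4" then show ?thesis using that v eqs tau_simps[of oi] by (simp; (linarith)?)
  next
    assume "I = 5" then show ?thesis using that v eqs tau_simps[of oi] by (simp; (linarith)?)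
  qed
  show ?H using all by simp
qed

end



lemma two_pm: "two_vec u v x y \<bullet> pm_vec u v = int u * x - int v * y"
  by (simp add: scalar_prod_def two_vec_def pm_vec_def atLeast0LessThan sum_lt_add sum_negf)

lemma pm_two: "pm_vec u v \<bullet> two_vec u v x y = int u * x - int v * y"
  by (simp add: scalar_prod_def two_vec_def pm_vec_def atLeast0LessThan sum_lt_add sum_negf)

lemma Eb_T: "(block_mat [k,l,p,q,r,s] [a,b,c,d,e,f] (Eb k l p q r s a b c d e f))\<^sup>T =
   block_mat [a,b,c,d,e,f] [k,l,p,q,r,s] (Eb a b c d e f k l p q r s)"
proof (rule block_mat_transpose)
  fix I K oi w assume "I < length [k,l,p,q,r,s]" "K < length [a,b,c,d,e,f]"
    "oi < [k,l,p,q,r,s]!I" "w < [a,b,c,d,e,f]!K"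
  then show "Eb a b c d e f k l p q r s ! K ! I $$ (w, oi) = Eb k l p q r s a b c d e f ! I ! K $$ (oi, w)"
    using less6[of I] less6[of K] by (auto simp: Eb_def)
qed

lemma Ab_T:
  assumes dims:
      "X11 \<in> carrier_mat k e" "X12 \<in> carrier_mat k f"
      "X21 \<in> carrier_mat l e" "X22 \<in> carrier_mat l f"
      "Y11 \<in> carrier_mat p c" "Y12 \<in> carrier_mat p d"
      "Y21 \<in> carrier_mat q c" "Y22 \<in> carrier_mat q d"
      "Z11 \<in> carrier_mat r a" "Z12 \<in> carrier_mat r b"
      "Z21 \<in> carrier_mat s a" "Z22 \<in> carrier_mat s b"
  shows "(block_mat [k,l,p,q,r,s] [a,b,c,d,e,f] (Ab k l p q r s a b c d e f X11 X12 X21 X22 Y11 Y12 Y21 Y22 Z11 Z12 Z21 Z22))\<^sup>T =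
   block_mat [a,b,c,d,e,f] [k,l,p,q,r,s] (Ab a b c d e f k l p q r s (Z11\<^sup>T) (Z21\<^sup>T) (Z12\<^sup>T) (Z22\<^sup>T)
        (Y11\<^sup>T) (Y21\<^sup>T) (Y12\<^sup>T) (Y22\<^sup>T) (X11\<^sup>T) (X21\<^sup>T) (X12\<^sup>T) (X22\<^sup>T))"
proof (rule block_mat_transpose)
  fix I K oi w assume "I < length [k,l,p,q,r,s]" "K < length [a,b,c,d,e,f]"
    "oi < [k,l,p,q,r,s]!I" "w < [a,b,c,d,e,f]!K"
  then show "Ab a b c d e f k l p q r s (Z11\<^sup>T) (Z21\<^sup>T) (Z12\<^sup>T) (Z22\<^sup>T)
        (Y11\<^sup>T) (Y21\<^sup>T) (Y12\<^sup>T) (Y22\<^sup>T) (X11\<^sup>T) (X21\<^sup>T) (X12\<^sup>T) (X22\<^sup>T) ! K ! I $$ (w, oi) =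
      Ab k l p q r s a b c d e f X11 X12 X21 X22 Y11 Y12 Y21 Y22 Z11 Z12 Z21 Z22 ! I ! K $$ (oi, w)"
    using less6[of I] less6[of K] dims by (auto simp: Ab_def)
qed

lemma AE01: "I < 6 \<Longrightarrow> K < 6 \<Longrightarrow> oi < [k,l,p,q,r,s]!I \<Longrightarrow> w < [a,b,c,d,e,f]!K \<Longrightarrow>
   (epT I K = 1 \<longrightarrow> Ab k l p q r s a b c d e f X11 X12 X21 X22 Y11 Y12 Y21 Y22 Z11 Z12 Z21 Z22 !I!K$$(oi,w) = 0) \<and>
   (epT I K = -1 \<longrightarrow> Ab k l p q r s a b c d e f X11 X12 X21 X22 Y11 Y12 Y21 Y22 Z11 Z12 Z21 Z22 !I!K$$(oi,w) = 1)"
  using less6[of I] less6[of K] by (auto simp: Ab_def epT_def)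

lemma rel_from_rows:
  assumes h: "block_mat [k,l,p,q,r,s] [a,b,c,d,e,f] (Eb k l p q r s a b c d e f) *\<^sub>v ones (sum_list [a,b,c,d,e,f])
      = 0\<^sub>v (sum_list [k,l,p,q,r,s])"
    and pos: "k + l > 0" "p + q > 0"
  shows "int a - int b = int d - int c" "int a - int b = int f - int e"
proof -
  have row: "(\<Sum>K<length [a,b,c,d,e,f]. epT I K * int ([a,b,c,d,e,f]!K)) = 0" if "I < 6" "0 < [k,l,p,q,r,s]!I" for I
  proof -
    have eq: "(block_mat [k,l,p,q,r,s] [a,b,c,d,e,f] (Eb k l p q r s a b c d e f) *\<^sub>v ones (sum_list [a,b,c,d,e,f]))
       $ (sum_list (take I [k,l,p,q,r,s]) + 0) = (\<Sum>K<length [a,b,c,d,e,f]. epT I K * int ([a,b,c,d,e,f]!K))"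
      by (rule rowsum_entry) (use that in \<open>auto intro: Eb_ep\<close>)
    have lt: "sum_list (take I [k,l,p,q,r,s]) + 0 < sum_list [k,l,p,q,r,s]"
      using take_nth_le[of I "[k,l,p,q,r,s]"] that by simp
    have "(block_mat [k,l,p,q,r,s] [a,b,c,d,e,f] (Eb k l p q r s a b c d e f) *\<^sub>v ones (sum_list [a,b,c,d,e,f]))
       $ (sum_list (take I [k,l,p,q,r,s]) + 0) = 0"
      unfolding h using lt by (rule index_zero_vec(1))
    then show ?thesis using eq by simp
  qed
  show "int a - int b = int d - int c"
  proof (cases "k > 0")
    case True then show ?thesis using row[of 0] by (simp add: sum6 epT_def)
  next
    case False then show ?thesis using row[of 1] pos by (simp add: sum6 epT_def)
  qed
  show "int a - int b = int f - int e"
  proof (cases "p > 0")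
    case True then show ?thesis using row[of 2] by (simp add: sum6 epT_def)
  next
    case False then show ?thesis using row[of 3] pos by (simp add: sum6 epT_def)
  qed
qed



theorem theorem4p22:
  fixes k l p q r s a b c d e f :: nat
    and X11 X12 X21 X22 Y11 Y12 Y21 Y22 Z11 Z12 Z21 Z22 :: "int mat"
    and E A X Y Z :: "int mat"
  defines "E \<equiv> block_mat [k, l, p, q, r, s] [a, b, c, d, e, f]
      [[ J k a, - J k b, J k c, - J k d, 0\<^sub>m k e, 0\<^sub>m k f],
       [- J l a, J l b, - J l c, J l d, 0\<^sub>m l e, 0\<^sub>m l f],
       [ J p a, - J p b, 0\<^sub>m p c, 0\<^sub>m p d, J p e, - J p f],
       [- J q a, J q b, 0\<^sub>m q c, 0\<^sub>m q d, - J q e, J q f],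
       [0\<^sub>m r a, 0\<^sub>m r b, J r c, - J r d, - J r e, J r f],
       [0\<^sub>m s a, 0\<^sub>m s b, - J s c, J s d, J s e, - J s f]]"
  defines "A \<equiv> block_mat [k, l, p, q, r, s] [a, b, c, d, e, f]
      [[0\<^sub>m k a, J k b, 0\<^sub>m k c, J k d, X11, X12],
       [J l a, 0\<^sub>m l b, J l c, 0\<^sub>m l d, X21, X22],
       [0\<^sub>m p a, J p b, Y11, Y12, 0\<^sub>m p e, J p f],
       [J q a, 0\<^sub>m q b, Y21, Y22, J q e, 0\<^sub>m q f],
       [Z11, Z12, 0\<^sub>m r c, J r d, J r e, 0\<^sub>m r f],
       [Z21, Z22, J s c, 0\<^sub>m s d, 0\<^sub>m s e, J s f]]"
  defines "X \<equiv> four_block_mat X11 X12 X21 X22"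
      and "Y \<equiv> four_block_mat Y11 Y12 Y21 Y22"
      and "Z \<equiv> four_block_mat Z11 Z12 Z21 Z22"
  assumes dims:
      "X11 \<in> carrier_mat k e" "X12 \<in> carrier_mat k f"
      "X21 \<in> carrier_mat l e" "X22 \<in> carrier_mat l f"
      "Y11 \<in> carrier_mat p c" "Y12 \<in> carrier_mat p d"
      "Y21 \<in> carrier_mat q c" "Y22 \<in> carrier_mat q d"
      "Z11 \<in> carrier_mat r a" "Z12 \<in> carrier_mat r b"
      "Z21 \<in> carrier_mat s a" "Z22 \<in> carrier_mat s b"
    and E_row: "E *\<^sub>v ones (a + b + c + d + e + f) = 0\<^sub>v (k + l + p + q + r + s)"
    and E_col: "E\<^sup>T *\<^sub>v ones (k + l + p + q + r + s) = 0\<^sub>v (a + b + c + d + e + f)"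
    and pos: "a + b > 0" "c + d > 0" "e + f > 0" "k + l > 0" "p + q > 0" "r + s > 0"
    and A01: "zero_one_mat A"
  shows "(gram_mates A (A + E) \<longleftrightarrow>
          (\<exists>x1 x2 y1 y2 z1 z2 :: int.
              X *\<^sub>v pm_vec e f = two_vec k l x1 x2 \<and>
              Y *\<^sub>v pm_vec c d = two_vec p q y1 y2 \<and>
              Z *\<^sub>v pm_vec a b = two_vec r s z1 z2 \<and>
              x1 = y2 \<and> y2 = - z2 \<and> x2 = y1 \<and> y1 = - z1 \<and>
              x1 + x2 = y1 + y2 \<and> y1 + y2 = - (z1 + z2) \<and> - (z1 + z2) = int e - int f) \<and>
          (\<exists>\<alpha>1 \<alpha>2 \<beta>1 \<beta>2 \<gamma>1 \<gamma>2 :: int.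
              X\<^sup>T *\<^sub>v pm_vec k l = two_vec e f \<alpha>1 \<alpha>2 \<and>
              Y\<^sup>T *\<^sub>v pm_vec p q = two_vec c d \<beta>1 \<beta>2 \<and>
              Z\<^sup>T *\<^sub>v pm_vec r s = two_vec a b \<gamma>1 \<gamma>2 \<and>
              \<gamma>1 = \<beta>2 \<and> \<beta>2 = - \<alpha>2 \<and> \<gamma>2 = \<beta>1 \<and> \<beta>1 = - \<alpha>1 \<and>
              \<gamma>1 + \<gamma>2 = \<beta>1 + \<beta>2 \<and> \<beta>1 + \<beta>2 = - (\<alpha>1 + \<alpha>2) \<and> - (\<alpha>1 + \<alpha>2) = int l - int k))
       \<and>
       (\<forall>x1 x2 y1 y2 z1 z2 \<alpha>1 \<alpha>2 \<beta>1 \<beta>2 \<gamma>1 \<gamma>2 :: int.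
          (X *\<^sub>v pm_vec e f = two_vec k l x1 x2 \<and>
           Y *\<^sub>v pm_vec c d = two_vec p q y1 y2 \<and>
           Z *\<^sub>v pm_vec a b = two_vec r s z1 z2 \<and>
           x1 = y2 \<and> y2 = - z2 \<and> x2 = y1 \<and> y1 = - z1 \<and>
           x1 + x2 = y1 + y2 \<and> y1 + y2 = - (z1 + z2) \<and> - (z1 + z2) = int e - int f) \<and>
          (X\<^sup>T *\<^sub>v pm_vec k l = two_vec e f \<alpha>1 \<alpha>2 \<and>
           Y\<^sup>T *\<^sub>v pm_vec p q = two_vec c d \<beta>1 \<beta>2 \<and>
           Z\<^sup>T *\<^sub>v pm_vec r s = two_vec a b \<gamma>1 \<gamma>2 \<and>
           \<gamma>1 = \<beta>2 \<and> \<beta>2 = - \<alpha>2 \<and> \<gamma>2 = \<beta>1 \<and> \<beta>1 = - \<alpha>1 \<and>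
           \<gamma>1 + \<gamma>2 = \<beta>1 + \<beta>2 \<and> \<beta>1 + \<beta>2 = - (\<alpha>1 + \<alpha>2) \<and> - (\<alpha>1 + \<alpha>2) = int l - int k)
          \<longrightarrow> int e * \<alpha>1 - int f * \<alpha>2 = int k * x1 - int l * x2 \<and>
              int c * \<beta>1 - int d * \<beta>2 = int p * y1 - int q * y2 \<and>
              int a * \<gamma>1 - int b * \<gamma>2 = int r * z1 - int s * z2)"
proof -
  let ?rs = "[k,l,p,q,r,s]" and ?cs = "[a,b,c,d,e,f]"
  let ?BA = "Ab k l p q r s a b c d e f X11 X12 X21 X22 Y11 Y12 Y21 Y22 Z11 Z12 Z21 Z22"
  let ?BAT = "Ab a b c d e f k l p q r s (Z11\<^sup>T) (Z21\<^sup>T) (Z12\<^sup>T) (Z22\<^sup>T)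
        (Y11\<^sup>T) (Y21\<^sup>T) (Y12\<^sup>T) (Y22\<^sup>T) (X11\<^sup>T) (X21\<^sup>T) (X12\<^sup>T) (X22\<^sup>T)"
  have Edef: "E = block_mat ?rs ?cs (Eb k l p q r s a b c d e f)" unfolding E_def Eb_def ..
  have Adef: "A = block_mat ?rs ?cs ?BA" unfolding A_def Ab_def ..
  have sc: "sum_list ?cs = a+b+c+d+e+f" "sum_list ?rs = k+l+p+q+r+s" by simp_all
  have ET: "E\<^sup>T = block_mat ?cs ?rs (Eb a b c d e f k l p q r s)" unfolding Edef by (rule Eb_T)
  have AT: "A\<^sup>T = block_mat ?cs ?rs ?BAT" unfolding Adef by (rule Ab_T[OF dims])
  have rel: "int a - int b = int d - int c" "int a - int b = int f - int e"
    using rel_from_rows[of k l p q r s a b c d e f] E_row pos unfolding Edef sc by auto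
  have relT: "int k - int l = int q - int p" "int k - int l = int s - int r"
    using rel_from_rows[of a b c d e f k l p q r s] E_col pos unfolding ET[symmetric] sc by auto
  interpret O: gm k l p q r s a b c d e f X11 X12 X21 X22 Y11 Y12 Y21 Y22 Z11 Z12 Z21 Z22
    using dims rel pos by unfold_locales auto
  interpret T: gm a b c d e f k l p q r s "Z11\<^sup>T" "Z21\<^sup>T" "Z12\<^sup>T" "Z22\<^sup>T"
        "Y11\<^sup>T" "Y21\<^sup>T" "Y12\<^sup>T" "Y22\<^sup>T" "X11\<^sup>T" "X21\<^sup>T" "X12\<^sup>T" "X22\<^sup>T"
    using dims relT pos by unfold_locales auto
  have XT: "X\<^sup>T = four_block_mat (X11\<^sup>T) (X21\<^sup>T) (X12\<^sup>T) (X22\<^sup>T)"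
    unfolding X_def by (rule transpose_four_block_mat[OF dims(1-4)])
  have YT: "Y\<^sup>T = four_block_mat (Y11\<^sup>T) (Y21\<^sup>T) (Y12\<^sup>T) (Y22\<^sup>T)"
    unfolding Y_def by (rule transpose_four_block_mat[OF dims(5-8)])
  have ZT: "Z\<^sup>T = four_block_mat (Z11\<^sup>T) (Z21\<^sup>T) (Z12\<^sup>T) (Z22\<^sup>T)"
    unfolding Z_def by (rule transpose_four_block_mat[OF dims(9-12)])
  define C1 where "C1 = (\<exists>x1 x2 y1 y2 z1 z2 :: int.
              X *\<^sub>v pm_vec e f = two_vec k l x1 x2 \<and>
              Y *\<^sub>v pm_vec c d = two_vec p q y1 y2 \<and>
              Z *\<^sub>v pm_vec a b = two_vec r s z1 z2 \<and>
              x1 = y2 \<and> y2 = - z2 \<and> x2 = y1 \<and> y1 = - z1 \<and>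
              x1 + x2 = y1 + y2 \<and> y1 + y2 = - (z1 + z2) \<and> - (z1 + z2) = int e - int f)"
  define C2 where "C2 = (\<exists>\<alpha>1 \<alpha>2 \<beta>1 \<beta>2 \<gamma>1 \<gamma>2 :: int.
              X\<^sup>T *\<^sub>v pm_vec k l = two_vec e f \<alpha>1 \<alpha>2 \<and>
              Y\<^sup>T *\<^sub>v pm_vec p q = two_vec c d \<beta>1 \<beta>2 \<and>
              Z\<^sup>T *\<^sub>v pm_vec r s = two_vec a b \<gamma>1 \<gamma>2 \<and>
              \<gamma>1 = \<beta>2 \<and> \<beta>2 = - \<alpha>2 \<and> \<gamma>2 = \<beta>1 \<and> \<beta>1 = - \<alpha>1 \<and>
              \<gamma>1 + \<gamma>2 = \<beta>1 + \<beta>2 \<and> \<beta>1 + \<beta>2 = - (\<alpha>1 + \<alpha>2) \<and> - (\<alpha>1 + \<alpha>2) = int l - int k)"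
  have row: "(A+E)*(A+E)\<^sup>T = A*A\<^sup>T \<longleftrightarrow> C1"
    unfolding C1_def X_def Y_def Z_def Adef Edef O.gram_iff O.cond_iff ..
  have colT: "(A\<^sup>T+E\<^sup>T)*(A\<^sup>T+E\<^sup>T)\<^sup>T = A\<^sup>T*A\<^sup>T\<^sup>T \<longleftrightarrow> (\<exists>x1 x2 y1 y2 z1 z2 :: int.
              Z\<^sup>T *\<^sub>v pm_vec r s = two_vec a b x1 x2 \<and>
              Y\<^sup>T *\<^sub>v pm_vec p q = two_vec c d y1 y2 \<and>
              X\<^sup>T *\<^sub>v pm_vec k l = two_vec e f z1 z2 \<and>
              x1 = y2 \<and> y2 = - z2 \<and> x2 = y1 \<and> y1 = - z1 \<and>
              x1 + x2 = y1 + y2 \<and> y1 + y2 = - (z1 + z2) \<and> - (z1 + z2) = int r - int s)"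
    unfolding XT YT ZT AT ET T.gram_iff T.cond_iff ..
  have C2': "(\<exists>x1 x2 y1 y2 z1 z2 :: int.
              Z\<^sup>T *\<^sub>v pm_vec r s = two_vec a b x1 x2 \<and>
              Y\<^sup>T *\<^sub>v pm_vec p q = two_vec c d y1 y2 \<and>
              X\<^sup>T *\<^sub>v pm_vec k l = two_vec e f z1 z2 \<and>
              x1 = y2 \<and> y2 = - z2 \<and> x2 = y1 \<and> y1 = - z1 \<and>
              x1 + x2 = y1 + y2 \<and> y1 + y2 = - (z1 + z2) \<and> - (z1 + z2) = int r - int s) \<longleftrightarrow> C2"
  proof
    assume "\<exists>x1 x2 y1 y2 z1 z2 :: int.
              Z\<^sup>T *\<^sub>v pm_vec r s = two_vec a b x1 x2 \<and>
              Y\<^sup>T *\<^sub>v pm_vec p q = two_vec c d y1 y2 \<and>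
              X\<^sup>T *\<^sub>v pm_vec k l = two_vec e f z1 z2 \<and>
              x1 = y2 \<and> y2 = - z2 \<and> x2 = y1 \<and> y1 = - z1 \<and>
              x1 + x2 = y1 + y2 \<and> y1 + y2 = - (z1 + z2) \<and> - (z1 + z2) = int r - int s"
    then obtain x1 x2 y1 y2 z1 z2 where h: "Z\<^sup>T *\<^sub>v pm_vec r s = two_vec a b x1 x2 \<and>
              Y\<^sup>T *\<^sub>v pm_vec p q = two_vec c d y1 y2 \<and>
              X\<^sup>T *\<^sub>v pm_vec k l = two_vec e f z1 z2 \<and>
              x1 = y2 \<and> y2 = - z2 \<and> x2 = y1 \<and> y1 = - z1 \<and>
              x1 + x2 = y1 + y2 \<and> y1 + y2 = - (z1 + z2) \<and> - (z1 + z2) = int r - int s" by (elim exE) (rule that)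
    have "int r - int s = int l - int k" using relT by linarith
    then show C2 unfolding C2_def using h by (intro exI[of _ z1] exI[of _ z2] exI[of _ y1] exI[of _ y2] exI[of _ x1] exI[of _ x2]) simp
  next
    assume C2
    then obtain x1 x2 y1 y2 z1 z2 where h: "X\<^sup>T *\<^sub>v pm_vec k l = two_vec e f x1 x2 \<and>
              Y\<^sup>T *\<^sub>v pm_vec p q = two_vec c d y1 y2 \<and>
              Z\<^sup>T *\<^sub>v pm_vec r s = two_vec a b z1 z2 \<and>
              z1 = y2 \<and> y2 = - x2 \<and> z2 = y1 \<and> y1 = - x1 \<and>
              z1 + z2 = y1 + y2 \<and> y1 + y2 = - (x1 + x2) \<and> - (x1 + x2) = int l - int k"
      unfolding C2_def by (elim exE) (rule that)
    have "int r - int s = int l - int k" using relT by linarith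
    then show "\<exists>x1 x2 y1 y2 z1 z2 :: int.
              Z\<^sup>T *\<^sub>v pm_vec r s = two_vec a b x1 x2 \<and>
              Y\<^sup>T *\<^sub>v pm_vec p q = two_vec c d y1 y2 \<and>
              X\<^sup>T *\<^sub>v pm_vec k l = two_vec e f z1 z2 \<and>
              x1 = y2 \<and> y2 = - z2 \<and> x2 = y1 \<and> y1 = - z1 \<and>
              x1 + x2 = y1 + y2 \<and> y1 + y2 = - (z1 + z2) \<and> - (z1 + z2) = int r - int s"
      using h by (intro exI[of _ z1] exI[of _ z2] exI[of _ y1] exI[of _ y2] exI[of _ x1] exI[of _ x2]) simp
  qed
  have dA: "dim_row A = sum_list ?rs" "dim_col A = sum_list ?cs" unfolding Adef by (simp_all only: block_mat_dims)
  have dE: "dim_row E = sum_list ?rs" "dim_col E = sum_list ?cs" unfolding Edef by (simp_all only: block_mat_dims)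
  have Ac: "A \<in> carrier_mat (k+l+p+q+r+s) (a+b+c+d+e+f)" by (rule carrier_matI) (simp_all only: dA sc)
  have Ec: "E \<in> carrier_mat (k+l+p+q+r+s) (a+b+c+d+e+f)" by (rule carrier_matI) (simp_all only: dE sc)
  have AEt: "(A+E)\<^sup>T = A\<^sup>T + E\<^sup>T" by (rule transpose_add[OF Ac Ec])
  have AEt2: "(A\<^sup>T+E\<^sup>T)\<^sup>T = A+E" by (simp add: AEt[symmetric])
  have e1: "(A+E)\<^sup>T*(A+E) = (A\<^sup>T+E\<^sup>T)*(A\<^sup>T+E\<^sup>T)\<^sup>T" unfolding AEt2 AEt ..
  have e2: "(A+E)\<^sup>T*(A+E) = A\<^sup>T*A \<longleftrightarrow> (A\<^sup>T+E\<^sup>T)*(A\<^sup>T+E\<^sup>T)\<^sup>T = A\<^sup>T*A\<^sup>T\<^sup>T"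
    unfolding e1 transpose_transpose ..
  have col: "(A+E)\<^sup>T*(A+E) = A\<^sup>T*A \<longleftrightarrow> C2" using e2 colT C2' by blast
  have z1: "zero_one_mat (A+E)"
    unfolding zero_one_mat_def
  proof (intro allI impI)
    fix i j assume "i < dim_row (A+E)" "j < dim_col (A+E)"
    then have i: "i < sum_list ?rs" and j: "j < sum_list ?cs" by (simp_all only: index_add_mat dE)
    obtain I oi where bi: "blk ?rs i = (I,oi)" by (cases "blk ?rs i") auto
    obtain K w where bj: "blk ?cs j = (K,w)" by (cases "blk ?cs j") auto
    from blk_lt[OF i bi] have I: "I < 6" "oi < ?rs!I" "i = sum_list (take I ?rs) + oi" by auto
    from blk_lt[OF j bj] have K: "K < 6" "w < ?cs!K" "j = sum_list (take K ?cs) + w" by auto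
    have Ae: "A $$ (i,j) = ?BA!I!K $$ (oi,w)" unfolding Adef I(3) K(3) using I K by (intro block_mat_at) auto
    have Ee: "E $$ (i,j) = epT I K" unfolding Edef I(3) K(3) using I K
      by (subst block_mat_at) (auto intro: Eb_ep)
    have A01': "A $$ (i,j) \<in> {0,1}" using A01 i j unfolding zero_one_mat_def dA by blast
    have "epT I K \<in> {-1,0,1}" using less6[OF I(1)] less6[OF K(1)] by (auto simp: epT_def)
    moreover have "(A+E) $$ (i,j) = A $$ (i,j) + E $$ (i,j)" by (rule index_add_mat(1)) (use i j dE in simp_all)
    ultimately show "(A+E) $$ (i,j) \<in> {0,1}" using AE01[OF I(1) K(1) I(2) K(2)] Ae Ee A01' by auto
  qed
  have ne: "A \<noteq> A + E"
  proof
    assume eq: "A = A + E"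
    have i: "0 < sum_list ?rs" and j: "0 < sum_list ?cs" using pos by auto
    obtain I oi where bi: "blk ?rs 0 = (I,oi)" by (cases "blk ?rs 0") auto
    obtain K w where bj: "blk ?cs 0 = (K,w)" by (cases "blk ?cs 0") auto
    from blk_lt[OF i bi] have I: "I < 6" "oi < ?rs!I" "0 = sum_list (take I ?rs) + oi" by auto
    from blk_lt[OF j bj] have K: "K < 6" "w < ?cs!K" "0 = sum_list (take K ?cs) + w" by auto
    have I2: "I < 2"
    proof (rule ccontr)
      assume "\<not> I < 2"
      then have "k + l \<le> sum_list (take I ?rs)" using I(1) less6[OF I(1)] by auto
      then show False using I(3) pos by linarith
    qed
    have K2: "K < 2"
    proof (rule ccontr)
      assume "\<not> K < 2"
      then have "a + b \<le> sum_list (take K ?cs)" using K(1) less6[OF K(1)] by auto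
      then show False using K(3) pos by linarith
    qed
    have "E $$ (sum_list (take I ?rs) + oi, sum_list (take K ?cs) + w) = epT I K" unfolding Edef using I K
      by (subst block_mat_at) (auto intro: Eb_ep)
    then have Ee: "E $$ (0,0) = epT I K" by (simp only: I(3)[symmetric] K(3)[symmetric])
    have "epT I K \<noteq> 0" using I2 K2 by (auto simp: epT_def less_2_cases_iff)
    moreover have "(A+E) $$ (0,0) = A $$ (0,0) + E $$ (0,0)" by (rule index_add_mat(1)) (use i j dE in simp_all)
    ultimately show False using eq Ee by simp
  qed
  have row': "A*A\<^sup>T = (A+E)*(A+E)\<^sup>T \<longleftrightarrow> C1" by (rule trans[OF eq_commute row])
  have col': "A\<^sup>T*A = (A+E)\<^sup>T*(A+E) \<longleftrightarrow> C2" by (rule trans[OF eq_commute col])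
  have part1: "gram_mates A (A + E) \<longleftrightarrow> C1 \<and> C2"
    unfolding gram_mates_def row' col' using A01 z1 ne by simp
  have part2: "\<forall>x1 x2 y1 y2 z1 z2 \<alpha>1 \<alpha>2 \<beta>1 \<beta>2 \<gamma>1 \<gamma>2 :: int.
          (X *\<^sub>v pm_vec e f = two_vec k l x1 x2 \<and>
           Y *\<^sub>v pm_vec c d = two_vec p q y1 y2 \<and>
           Z *\<^sub>v pm_vec a b = two_vec r s z1 z2 \<and>
           x1 = y2 \<and> y2 = - z2 \<and> x2 = y1 \<and> y1 = - z1 \<and>
           x1 + x2 = y1 + y2 \<and> y1 + y2 = - (z1 + z2) \<and> - (z1 + z2) = int e - int f) \<and>
          (X\<^sup>T *\<^sub>v pm_vec k l = two_vec e f \<alpha>1 \<alpha>2 \<and>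
           Y\<^sup>T *\<^sub>v pm_vec p q = two_vec c d \<beta>1 \<beta>2 \<and>
           Z\<^sup>T *\<^sub>v pm_vec r s = two_vec a b \<gamma>1 \<gamma>2 \<and>
           \<gamma>1 = \<beta>2 \<and> \<beta>2 = - \<alpha>2 \<and> \<gamma>2 = \<beta>1 \<and> \<beta>1 = - \<alpha>1 \<and>
           \<gamma>1 + \<gamma>2 = \<beta>1 + \<beta>2 \<and> \<beta>1 + \<beta>2 = - (\<alpha>1 + \<alpha>2) \<and> - (\<alpha>1 + \<alpha>2) = int l - int k)
          \<longrightarrow> int e * \<alpha>1 - int f * \<alpha>2 = int k * x1 - int l * x2 \<and>
              int c * \<beta>1 - int d * \<beta>2 = int p * y1 - int q * y2 \<and>
              int a * \<gamma>1 - int b * \<gamma>2 = int r * z1 - int s * z2"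
  proof (intro allI impI)
    fix x1 x2 y1 y2 z1 z2 \<alpha>1 \<alpha>2 \<beta>1 \<beta>2 \<gamma>1 \<gamma>2 :: int
    assume h: "(X *\<^sub>v pm_vec e f = two_vec k l x1 x2 \<and>
           Y *\<^sub>v pm_vec c d = two_vec p q y1 y2 \<and>
           Z *\<^sub>v pm_vec a b = two_vec r s z1 z2 \<and>
           x1 = y2 \<and> y2 = - z2 \<and> x2 = y1 \<and> y1 = - z1 \<and>
           x1 + x2 = y1 + y2 \<and> y1 + y2 = - (z1 + z2) \<and> - (z1 + z2) = int e - int f) \<and>
          (X\<^sup>T *\<^sub>v pm_vec k l = two_vec e f \<alpha>1 \<alpha>2 \<and>
           Y\<^sup>T *\<^sub>v pm_vec p q = two_vec c d \<beta>1 \<beta>2 \<and>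
           Z\<^sup>T *\<^sub>v pm_vec r s = two_vec a b \<gamma>1 \<gamma>2 \<and>
           \<gamma>1 = \<beta>2 \<and> \<beta>2 = - \<alpha>2 \<and> \<gamma>2 = \<beta>1 \<and> \<beta>1 = - \<alpha>1 \<and>
           \<gamma>1 + \<gamma>2 = \<beta>1 + \<beta>2 \<and> \<beta>1 + \<beta>2 = - (\<alpha>1 + \<alpha>2) \<and> - (\<alpha>1 + \<alpha>2) = int l - int k)"
    have Xc: "X \<in> carrier_mat (k+l) (e+f)" unfolding X_def by (rule four_block_carrier_mat[OF dims(1) dims(4)])
    have Yc: "Y \<in> carrier_mat (p+q) (c+d)" unfolding Y_def by (rule four_block_carrier_mat[OF dims(5) dims(8)])
    have Zc: "Z \<in> carrier_mat (r+s) (a+b)" unfolding Z_def by (rule four_block_carrier_mat[OF dims(9) dims(12)])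
    have pmc: "pm_vec u v \<in> carrier_vec (u+v)" for u v by (simp add: pm_vec_def)
    have "(X\<^sup>T *\<^sub>v pm_vec k l) \<bullet> pm_vec e f = pm_vec k l \<bullet> (X *\<^sub>v pm_vec e f)"
      by (rule transpose_vec_mult_scalar[OF Xc pmc pmc])
    then have 1: "int e * \<alpha>1 - int f * \<alpha>2 = int k * x1 - int l * x2" using h by (simp add: two_pm pm_two)
    have "(Y\<^sup>T *\<^sub>v pm_vec p q) \<bullet> pm_vec c d = pm_vec p q \<bullet> (Y *\<^sub>v pm_vec c d)"
      by (rule transpose_vec_mult_scalar[OF Yc pmc pmc])
    then have 2: "int c * \<beta>1 - int d * \<beta>2 = int p * y1 - int q * y2" using h by (simp add: two_pm pm_two)
    have "(Z\<^sup>T *\<^sub>v pm_vec r s) \<bullet> pm_vec a b = pm_vec r s \<bullet> (Z *\<^sub>v pm_vec a b)"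
      by (rule transpose_vec_mult_scalar[OF Zc pmc pmc])
    then have 3: "int a * \<gamma>1 - int b * \<gamma>2 = int r * z1 - int s * z2" using h by (simp add: two_pm pm_two)
    show "int e * \<alpha>1 - int f * \<alpha>2 = int k * x1 - int l * x2 \<and>
              int c * \<beta>1 - int d * \<beta>2 = int p * y1 - int q * y2 \<and>
              int a * \<gamma>1 - int b * \<gamma>2 = int r * z1 - int s * z2" using 1 2 3 by blast
  qed
  show ?thesis using part1 part2 unfolding C1_def C2_def by (rule conjI)
qed



end
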